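(* Let $f\in L^1(\mathbb{R}^2)$ and suppose there is $R>0$ with $\operatorname{supp} f\subset B(0;R)$. Let $C>0$ be a constant such that $C\|u\|_{L^2(\mathbb{R}^2)}\le \int_{\mathbb{R}^2}|u_x|+|u_y|$ for all $u\in BV(\mathbb{R}^2)$, and set $\lambda_0:=\frac{C}{R\sqrt{\pi}}$. If $0\le\lambda<\lambda_0$, then $u=0$ is the unique minimizer of $F_1$ over $BV(\mathbb{R}^2)$ and the unique minimizer of $\overline{F_1}$ over $BV(\mathbb{R}^2;\{0,1\})$.
   Context: For $u\in L^1_{loc}(\mathbb{R}^2)$ the anisotropic total variation is $\int_{\mathbb{R}^2}|u_x|+|u_y|:=\sup\{\int_{\mathbb{R}^2}u\,\mathrm{div}\,v : v\in C^1_c(\mathbb{R}^2;\mathbb{R}^2),\ |v(x)|_\infty\le 1\ \forall x\}$, where $|(a,b)|_\infty=\max(|a|,|b|)$. $BV(\mathbb{R}^2)$ is the space of $u\in L^1(\mathbb{R}^2)$ with finite (isotropic) total variation, and for $A\subset\mathbb{R}$, $BV(\mathbb{R}^2;A)$ denotes those $u\in BV(\mathbb{R}^2)$ with $u(x)\in A$ for a.e. $x$. For a fidelity parameter $\lambda\ge0$ and signal $f\in L^1(\mathbb{R}^2)$: $F_1(u)=\int_{\mathbb{R}^2}|u_x|+|u_y|+\lambda\|u-f\|_{L^1(\mathbb{R}^2)}$ for $u\in BV(\mathbb{R}^2)$, and $\overline{F_1}$ is the same expression restricted to $u\in BV(\mathbb{R}^2;\{0,1\})$. *)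

theory Defs
  imports "HOL-Analysis.Analysis"
begin

type_synonym R2 = "real^2"

definition C1c :: "(R2 \<Rightarrow> R2) \<Rightarrow> bool" where
  "C1c v \<longleftrightarrow>
     (\<exists>D :: R2 \<Rightarrow> (R2 \<Rightarrow>\<^sub>L R2).
        (\<forall>x. (v has_derivative blinfun_apply (D x)) (at x)) \<and> continuous_on UNIV D)
     \<and> compact (closure {x. v x \<noteq> 0})"

definition divergence :: "(R2 \<Rightarrow> R2) \<Rightarrow> R2 \<Rightarrow> real" where
  "divergence v x = (\<Sum>i\<in>UNIV. (frechet_derivative v (at x) (axis i 1)) $ i)"

definition aniso_TV :: "(R2 \<Rightarrow> real) \<Rightarrow> ereal" where
  "aniso_TV u = (SUP v \<in> {v. C1c v \<and> (\<forall>x. \<forall>i. \<bar>v x $ i\<bar> \<le> 1)}.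
                   ereal (\<integral>x. u x * divergence v x \<partial>lebesgue))"

definition iso_TV :: "(R2 \<Rightarrow> real) \<Rightarrow> ereal" where
  "iso_TV u = (SUP v \<in> {v. C1c v \<and> (\<forall>x. norm (v x) \<le> 1)}.
                   ereal (\<integral>x. u x * divergence v x \<partial>lebesgue))"

definition BV :: "(R2 \<Rightarrow> real) set" where
  "BV = {u. integrable lebesgue u \<and> iso_TV u < \<infinity>}"

definition BV_vals :: "real set \<Rightarrow> (R2 \<Rightarrow> real) set" where
  "BV_vals A = {u \<in> BV. AE x in lebesgue. u x \<in> A}"

definition L1norm :: "(R2 \<Rightarrow> real) \<Rightarrow> real" where
  "L1norm u = (\<integral>x. \<bar>u x\<bar> \<partial>lebesgue)"

definition L2norm :: "(R2 \<Rightarrow> real) \<Rightarrow> ereal" where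
  "L2norm u = (if u \<in> borel_measurable lebesgue \<and> integrable lebesgue (\<lambda>x. (u x)\<^sup>2)
               then ereal (sqrt (\<integral>x. (u x)\<^sup>2 \<partial>lebesgue)) else \<infinity>)"

definition F1 :: "real \<Rightarrow> (R2 \<Rightarrow> real) \<Rightarrow> (R2 \<Rightarrow> real) \<Rightarrow> ereal" where
  "F1 lam f u = aniso_TV u + ereal (lam * L1norm (\<lambda>x. u x - f x))"

end

theory Submission
  imports Defs
begin

lemma C1c_zero: "C1c (\<lambda>x. 0)"
  unfolding C1c_def
  apply (rule conjI)
  apply (rule exI[of _ "\<lambda>x. 0"])
  apply (auto simp: zero_blinfun.rep_eq)
  done

lemma div_zero: "divergence (\<lambda>x. 0) x = 0"
proof -
  have "((\<lambda>x::R2. 0::R2) has_derivative (\<lambda>h. 0)) (at x)" by (rule has_derivative_const)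
  hence "frechet_derivative (\<lambda>x::R2. 0::R2) (at x) = (\<lambda>h. 0)"
    using frechet_derivative_at by metis
  thus ?thesis unfolding divergence_def by simp
qed

lemma aniso_nonneg: "aniso_TV u \<ge> 0"
proof -
  have "(\<lambda>x. 0::R2) \<in> {v. C1c v \<and> (\<forall>x. \<forall>i. \<bar>v x $ i\<bar> \<le> 1)}" using C1c_zero by simp
  hence "ereal (\<integral>x. u x * divergence (\<lambda>x. 0) x \<partial>lebesgue) \<le> aniso_TV u"
    unfolding aniso_TV_def by (rule SUP_upper)
  thus ?thesis by (simp add: div_zero zero_ereal_def)
qed

lemma aniso_zero: "aniso_TV (\<lambda>x. 0) = 0"
proof -
  have "(\<lambda>x. 0::R2) \<in> {v. C1c v \<and> (\<forall>x. \<forall>i. \<bar>v x $ i\<bar> \<le> 1)}" using C1c_zero by simp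
  hence ne: "{v. C1c v \<and> (\<forall>x. \<forall>i. \<bar>v x $ i\<bar> \<le> 1)} \<noteq> {}" by blast
  show ?thesis unfolding aniso_TV_def using SUP_const[OF ne, of "0::ereal"] by (simp add: zero_ereal_def)
qed

lemma iso_zero: "iso_TV (\<lambda>x. 0) = 0"
proof -
  have "(\<lambda>x. 0::R2) \<in> {v. C1c v \<and> (\<forall>x. norm (v x) \<le> 1)}" using C1c_zero by simp
  hence ne: "{v. C1c v \<and> (\<forall>x. norm (v x) \<le> 1)} \<noteq> {}" by blast
  show ?thesis unfolding iso_TV_def using SUP_const[OF ne, of "0::ereal"] by (simp add: zero_ereal_def)
qed

lemma zero_BV: "(\<lambda>x. 0) \<in> BV" unfolding BV_def by (simp add: iso_zero)

lemma amgm_bound: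
  fixes s a m :: real
  assumes "a \<ge> 0" "m > 0" "\<And>t. t > 0 \<Longrightarrow> s \<le> (t * a + m / t) / 2"
  shows "s \<le> sqrt a * sqrt m"
proof (cases "a = 0")
  case True
  show ?thesis
  proof (rule ccontr)
    assume "\<not> ?thesis" hence s: "s > 0" using True by simp
    have "s \<le> (m / s * a + m / (m / s)) / 2" using assms(3)[of "m/s"] s assms by simp
    thus False using True s assms by simp
  qed
next
  case False
  hence a: "a > 0" using assms by simp
  define t where "t = sqrt m / sqrt a"
  have t: "t > 0" using a assms unfolding t_def by simp
  have "t * a = sqrt a * sqrt m" unfolding t_def using a
    by (simp add: field_simps)
  moreover have "m / t = sqrt a * sqrt m" unfolding t_def using a assms
    by (simp add: field_simps)
  ultimately show ?thesis using assms(3)[OF t] by simp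
qed


lemma key:
  fixes f u :: "R2 \<Rightarrow> real" and R C lam :: real
  assumes f_L1: "integrable lebesgue f"
    and R_pos: "R > 0"
    and supp: "AE x in lebesgue. f x \<noteq> 0 \<longrightarrow> x \<in> ball 0 R"
    and C_pos: "C > 0"
    and sobolev: "\<forall>u\<in>BV. ereal C * L2norm u \<le> aniso_TV u"
    and lam_nonneg: "0 \<le> lam"
    and lam_small: "lam < C / (R * sqrt pi)"
    and uBV: "u \<in> BV"
  shows "F1 lam f (\<lambda>x. 0) \<le> F1 lam f u \<and> (F1 lam f u \<le> F1 lam f (\<lambda>x. 0) \<longrightarrow> (AE x in lebesgue. u x = 0))"
proof -
  have F0: "F1 lam f (\<lambda>x. 0) = ereal (lam * (\<integral>x. \<bar>f x\<bar> \<partial>lebesgue))"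
    by (simp add: F1_def aniso_zero L1norm_def)
  have uint: "integrable lebesgue u" using uBV by (simp add: BV_def)
  show ?thesis
  proof (cases "aniso_TV u = \<infinity>")
    case True
    thus ?thesis by (simp add: F0 F1_def aniso_zero)
  next
    case False
    then obtain T where T: "aniso_TV u = ereal T" using aniso_nonneg[of u]
      by (cases "aniso_TV u") auto
    have T0: "T \<ge> 0" using aniso_nonneg[of u] T by simp
    have sob: "ereal C * L2norm u \<le> ereal T" using sobolev uBV T by auto
    have L2: "u \<in> borel_measurable lebesgue \<and> integrable lebesgue (\<lambda>x. (u x)\<^sup>2)"
    proof (rule ccontr)
      assume "\<not> ?thesis"
      hence "L2norm u = \<infinity>" by (simp add: L2norm_def)
      thus False using sob C_pos by simp
    qed
    define a where "a = (\<integral>x. (u x)\<^sup>2 \<partial>lebesgue)"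
    have a0: "a \<ge> 0" unfolding a_def by simp
    have Cq: "C * sqrt a \<le> T" using sob L2 by (simp add: L2norm_def a_def)
    define B where "B = ball (0::R2) R"
    have Bsets: "B \<in> sets lebesgue" unfolding B_def by simp
    define m where "m = measure lebesgue B"
    have m: "m = R^2 * pi"
    proof -
      have "measure lebesgue B = measure lborel B" unfolding B_def
        by (simp add: measure_completion)
      thus ?thesis unfolding m_def B_def using circle_area[of R 0] R_pos by simp
    qed
    have mpos: "m > 0" using m R_pos by simp
    have Bfin: "emeasure lebesgue B < \<infinity>"
      unfolding B_def
      using emeasure_bounded_finite[of "ball (0::R2) R"] by (simp add: emeasure_completion)
    have intI: "integrable lebesgue (\<lambda>x. indicator B x :: real)"
      using Bsets Bfin by (simp add: integrable_indicator_iff)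
    have intuI: "integrable lebesgue (\<lambda>x. \<bar>u x\<bar> * indicator B x)"
    proof -
      have "integrable lebesgue (\<lambda>x. indicator B x *\<^sub>R \<bar>u x\<bar>)"
        by (rule integrable_mult_indicator[OF Bsets]) (use uint in auto)
      thus ?thesis by (simp add: mult.commute)
    qed
    define s where "s = (\<integral>x. \<bar>u x\<bar> * indicator B x \<partial>lebesgue)"
    have "s \<le> (t * a + m / t) / 2" if t: "t > 0" for t
    proof -
      have "s \<le> (\<integral>x. (t * (u x)\<^sup>2 + indicator B x / t) / 2 \<partial>lebesgue)"
        unfolding s_def
      proof (rule integral_mono)
        show "integrable lebesgue (\<lambda>x. (t * (u x)\<^sup>2 + indicator B x / t) / 2)"
          using L2 intI by auto
        show "\<bar>u x\<bar> * indicator B x \<le> (t * (u x)\<^sup>2 + indicator B x / t) / 2" for x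
        proof (cases "x \<in> B")
          case True
          have "0 \<le> (t * \<bar>u x\<bar> - 1)^2 / t" using t by simp
          hence "0 \<le> (t^2 * \<bar>u x\<bar>^2 - 2 * t * \<bar>u x\<bar> + 1) / t"
            by (simp add: power2_eq_square algebra_simps)
          hence "0 \<le> t * (u x)^2 - 2 * \<bar>u x\<bar> + 1 / t" using t
            by (simp add: field_simps power2_eq_square)
          thus ?thesis using True by simp
        next
          case False then show ?thesis using t by simp
        qed
      qed (rule intuI)
      also have "\<dots> = (t * a + m / t) / 2"
        using L2 intI by (simp add: a_def m_def Bsets)
      finally show ?thesis .
    qed
    hence sbound: "s \<le> sqrt a * sqrt m" by (intro amgm_bound[OF a0 mpos]) auto
    have sqm: "sqrt m = R * sqrt pi" using m R_pos by (simp add: real_sqrt_mult)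
    have l1: "(\<integral>x. \<bar>f x\<bar> \<partial>lebesgue) - s \<le> (\<integral>x. \<bar>u x - f x\<bar> \<partial>lebesgue)"
    proof -
      have "(\<integral>x. \<bar>f x\<bar> \<partial>lebesgue) - s = (\<integral>x. \<bar>f x\<bar> - \<bar>u x\<bar> * indicator B x \<partial>lebesgue)"
        unfolding s_def using f_L1 intuI by simp
      also have "\<dots> \<le> (\<integral>x. \<bar>u x - f x\<bar> \<partial>lebesgue)"
      proof (rule integral_mono_AE)
        show "integrable lebesgue (\<lambda>x. \<bar>f x\<bar> - \<bar>u x\<bar> * indicator B x)" using f_L1 intuI by auto
        show "integrable lebesgue (\<lambda>x. \<bar>u x - f x\<bar>)" using f_L1 uint by auto
        show "AE x in lebesgue. \<bar>f x\<bar> - \<bar>u x\<bar> * indicator B x \<le> \<bar>u x - f x\<bar>"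
          using supp by eventually_elim (auto simp: B_def indicator_def)
      qed
      finally show ?thesis .
    qed
    define k where "k = R * sqrt pi"
    have kpos: "k > 0" unfolding k_def using R_pos by simp
    have lamk: "lam * k < C" using lam_small kpos unfolding k_def by (simp add: field_simps)
    have "lam * s \<le> lam * (sqrt a * k)"
      using sbound sqm lam_nonneg unfolding k_def by (simp add: mult_left_mono)
    also have "\<dots> = (lam * k) * sqrt a" by simp
    also have "\<dots> \<le> (lam * k / C) * T"
    proof -
      have "(lam * k) * sqrt a = (lam * k / C) * (C * sqrt a)" using C_pos by simp
      also have "\<dots> \<le> (lam * k / C) * T"
        using Cq lam_nonneg kpos C_pos by (intro mult_left_mono) auto
      finally show ?thesis .
    qed
    finally have ls: "lam * s \<le> (lam * k / C) * T" .
    have r1: "lam * k / C < 1" using lamk C_pos by simp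
    have Fu: "F1 lam f u = ereal (T + lam * (\<integral>x. \<bar>u x - f x\<bar> \<partial>lebesgue))"
      by (simp add: F1_def T L1norm_def)
    have main: "lam * (\<integral>x. \<bar>f x\<bar> \<partial>lebesgue) + (1 - lam * k / C) * T
                \<le> T + lam * (\<integral>x. \<bar>u x - f x\<bar> \<partial>lebesgue)"
    proof -
      have "lam * ((\<integral>x. \<bar>f x\<bar> \<partial>lebesgue) - s) \<le> lam * (\<integral>x. \<bar>u x - f x\<bar> \<partial>lebesgue)"
        using l1 lam_nonneg by (rule mult_left_mono)
      thus ?thesis using ls by (simp add: algebra_simps)
    qed
    have p1: "F1 lam f (\<lambda>x. 0) \<le> F1 lam f u"
      unfolding F0 Fu using main r1 T0
      by (smt (verit) ereal_less_eq(3) mult_nonneg_nonneg)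
    have p2: "AE x in lebesgue. u x = 0" if le: "F1 lam f u \<le> F1 lam f (\<lambda>x. 0)"
    proof -
      have "(1 - lam * k / C) * T \<le> 0" using le main unfolding F0 Fu by simp
      hence "T \<le> 0" using r1 T0 by (simp add: mult_le_0_iff)
      hence "C * sqrt a \<le> 0" using Cq by simp
      hence "a = 0" using C_pos a0 by (simp add: mult_le_0_iff)
      hence "AE x in lebesgue. (u x)\<^sup>2 = 0"
        using L2 integral_nonneg_eq_0_iff_AE[of lebesgue "\<lambda>x. (u x)\<^sup>2"] unfolding a_def by simp
      thus ?thesis by eventually_elim simp
    qed
    show ?thesis using p1 p2 by blast
  qed
qed

theorem mainTheorem1:
  fixes f :: "R2 \<Rightarrow> real" and R C lam :: real
  assumes f_L1: "integrable lebesgue f"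
    and R_pos: "R > 0"
    and supp: "AE x in lebesgue. f x \<noteq> 0 \<longrightarrow> x \<in> ball 0 R"
    and C_pos: "C > 0"
    and sobolev: "\<forall>u\<in>BV. ereal C * L2norm u \<le> aniso_TV u"
    and lam_nonneg: "0 \<le> lam"
    and lam_small: "lam < C / (R * sqrt pi)"
  shows "(\<forall>w\<in>BV. F1 lam f (\<lambda>x. 0) \<le> F1 lam f w)
       \<and> (\<forall>u\<in>BV. (\<forall>w\<in>BV. F1 lam f u \<le> F1 lam f w) \<longrightarrow> (AE x in lebesgue. u x = 0))
       \<and> (\<lambda>x. 0) \<in> BV_vals {0, 1}
       \<and> (\<forall>w\<in>BV_vals {0, 1}. F1 lam f (\<lambda>x. 0) \<le> F1 lam f w)
       \<and> (\<forall>u\<in>BV_vals {0, 1}. (\<forall>w\<in>BV_vals {0, 1}. F1 lam f u \<le> F1 lam f w)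
              \<longrightarrow> (AE x in lebesgue. u x = 0))"
proof -
  note K = key[OF assms]
  have z: "(\<lambda>x. 0) \<in> BV_vals {0, 1}" using zero_BV by (simp add: BV_vals_def)
  have sub: "BV_vals {0,1} \<subseteq> BV" by (auto simp: BV_vals_def)
  show ?thesis
    using K z sub zero_BV by blast
qed

end
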